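(* Let $\psi:A\to A'$ be a contraction of dimer algebras (of dimer quivers $Q$, $Q'$ on a torus, obtained by contracting a set of arrows $Q_1^*\subseteq Q_1$), and suppose $Q'$ has a perfect matching. Then no unit cycle of $Q$ is contracted to a vertex by $\psi$; that is, no unit cycle of $Q$ has all of its arrows in $Q_1^*$.
   Context: $k$ is an algebraically closed field. A dimer quiver on a torus is a finite quiver $Q$ embedded in $T^2$ such that each connected component of $T^2\setminus Q$ is simply connected and bounded by an oriented cycle (a unit cycle). Paths compose right to left. The dimer algebra is $A=kQ/I$, $I=\langle p-q\mid\exists a\in Q_1: ap,aq\text{ unit cycles}\rangle$. A perfect matching is a set of arrows containing exactly one arrow of each unit cycle. Contractions: for $Q_1^*\subseteq Q_1$, $Q'$ is obtained by removing each arrow of $Q_1^*$ and identifying its head and tail; $\psi:kQ\to kQ'$ is the $k$-linear map sending vertices to their images, arrows not in $Q_1^*$ to themselves, $\delta\in Q_1^*$ to $e_{\operatorname{t}(\delta)}$, multiplicative on paths. If $Q'$ is a dimer quiver with dimer algebra $A'=kQ'/I'$ and $\psi(I)\subseteq I'$, $\psi$ is called a contraction of dimer algebras. *)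

theory Defs
  imports "HOL-Combinatorics.Permutations" "HOL-Computational_Algebra.Polynomial"
begin

definition alg_closed :: "'k::field itself \<Rightarrow> bool" where
  "alg_closed _ \<longleftrightarrow> (\<forall>p::'k poly. degree p > 0 \<longrightarrow> (\<exists>x. poly p x = 0))"

text \<open>A quiver is given by a vertex set V, an arrow set E and tail/head maps t, h.
  A path is a pair (start vertex, list of arrows in traversal order); the trivial
  path at v is (v, []).\<close>

type_synonym ('v,'a) qpath = "'v \<times> 'a list"

definition is_path :: "'v set \<Rightarrow> 'a set \<Rightarrow> ('a \<Rightarrow> 'v) \<Rightarrow> ('a \<Rightarrow> 'v) \<Rightarrow> ('v,'a) qpath \<Rightarrow> bool" where
  "is_path V E t h p \<longleftrightarrow> fst p \<in> V \<and> set (snd p) \<subseteq> E \<and>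
     (snd p \<noteq> [] \<longrightarrow> t (hd (snd p)) = fst p) \<and>
     (\<forall>i. Suc i < length (snd p) \<longrightarrow> h (snd p ! i) = t (snd p ! Suc i))"

definition p_end :: "('a \<Rightarrow> 'v) \<Rightarrow> ('v,'a) qpath \<Rightarrow> 'v" where
  "p_end h p = (if snd p = [] then fst p else h (last (snd p)))"

text \<open>Paths compose right to left: pcomp h x y is "x after y" (first y, then x).\<close>
definition pcomp :: "('a \<Rightarrow> 'v) \<Rightarrow> ('v,'a) qpath \<Rightarrow> ('v,'a) qpath \<Rightarrow> ('v,'a) qpath option" where
  "pcomp h x y = (if p_end h y = fst x then Some (fst y, snd y @ snd x) else None)"

text \<open>Elements of the path algebra kQ: finitely supported k-valued functions on the paths.\<close>
definition in_kQ :: "'v set \<Rightarrow> 'a set \<Rightarrow> ('a \<Rightarrow> 'v) \<Rightarrow> ('a \<Rightarrow> 'v) \<Rightarrow> (('v,'a) qpath \<Rightarrow> 'k::field) \<Rightarrow> bool" where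
  "in_kQ V E t h f \<longleftrightarrow> finite {p. f p \<noteq> 0} \<and> (\<forall>p. f p \<noteq> 0 \<longrightarrow> is_path V E t h p)"

definition kQ_mult :: "('a \<Rightarrow> 'v) \<Rightarrow> (('v,'a) qpath \<Rightarrow> 'k::field) \<Rightarrow> (('v,'a) qpath \<Rightarrow> 'k) \<Rightarrow> (('v,'a) qpath \<Rightarrow> 'k)" where
  "kQ_mult h f g = (\<lambda>r. \<Sum>(x,y)\<in>{(x,y). f x \<noteq> 0 \<and> g y \<noteq> 0 \<and> pcomp h x y = Some r}. f x * g y)"

definition kQ_delta :: "('v,'a) qpath \<Rightarrow> (('v,'a) qpath \<Rightarrow> 'k::field)" where
  "kQ_delta p = (\<lambda>r. if r = p then 1 else 0)"

definition two_sided_ideal :: "'v set \<Rightarrow> 'a set \<Rightarrow> ('a \<Rightarrow> 'v) \<Rightarrow> ('a \<Rightarrow> 'v) \<Rightarrow> (('v,'a) qpath \<Rightarrow> 'k::field) set \<Rightarrow> bool" where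
  "two_sided_ideal V E t h J \<longleftrightarrow> J \<subseteq> {f. in_kQ V E t h f} \<and> (\<lambda>_. 0) \<in> J \<and>
     (\<forall>f\<in>J. \<forall>g\<in>J. (\<lambda>r. f r + g r) \<in> J) \<and>
     (\<forall>f\<in>J. \<forall>c. (\<lambda>r. c * f r) \<in> J) \<and>
     (\<forall>f\<in>J. \<forall>u. in_kQ V E t h u \<longrightarrow> kQ_mult h u f \<in> J \<and> kQ_mult h f u \<in> J)"

definition gen_ideal :: "'v set \<Rightarrow> 'a set \<Rightarrow> ('a \<Rightarrow> 'v) \<Rightarrow> ('a \<Rightarrow> 'v) \<Rightarrow> (('v,'a) qpath \<Rightarrow> 'k::field) set \<Rightarrow> (('v,'a) qpath \<Rightarrow> 'k) set" where
  "gen_ideal V E t h S = \<Inter>{J. two_sided_ideal V E t h J \<and> S \<subseteq> J}"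

text \<open>The embedding of Q in the torus is encoded combinatorially: pos a (resp. neg a) is the
  arrow following a in the unique counterclockwise (resp. clockwise) oriented unit cycle
  containing a. Unit cycles are the orbits of pos and neg.\<close>

definition cyc_orbit :: "('a \<Rightarrow> 'a) \<Rightarrow> 'a \<Rightarrow> 'a set" where
  "cyc_orbit f a = {(f ^^ n) a | n. True}"

definition cyc_len :: "('a \<Rightarrow> 'a) \<Rightarrow> 'a \<Rightarrow> nat" where
  "cyc_len f a = (LEAST n. 0 < n \<and> (f ^^ n) a = a)"

text \<open>For the unit cycle through a given by f, cyc_rest f h a is the path p with
  (unit cycle) = a p, i.e. the rest of the cycle, from h a to t a.\<close>
definition cyc_rest :: "('a \<Rightarrow> 'a) \<Rightarrow> ('a \<Rightarrow> 'v) \<Rightarrow> 'a \<Rightarrow> ('v,'a) qpath" where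
  "cyc_rest f h a = (h a, map (\<lambda>i. (f ^^ i) a) [1..<cyc_len f a])"

definition dimer_quiver :: "'v set \<Rightarrow> 'a set \<Rightarrow> ('a \<Rightarrow> 'v) \<Rightarrow> ('a \<Rightarrow> 'v) \<Rightarrow> ('a \<Rightarrow> 'a) \<Rightarrow> ('a \<Rightarrow> 'a) \<Rightarrow> bool" where
  "dimer_quiver V E t h pos neg \<longleftrightarrow>
     finite V \<and> finite E \<and> V \<noteq> {} \<and> t ` E \<subseteq> V \<and> h ` E \<subseteq> V \<and>
     pos permutes E \<and> neg permutes E \<and>
     (\<forall>a\<in>E. t (pos a) = h a \<and> t (neg a) = h a) \<and>
     \<comment> \<open>every vertex has a disk neighbourhood: its incident corners form one cycle\<close>
     (\<forall>v\<in>V. \<exists>a\<in>E. h a = v) \<and>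
     (\<forall>a\<in>E. \<forall>b\<in>E. h a = h b \<longrightarrow> (\<exists>n. ((\<lambda>x. inv neg (pos x)) ^^ n) a = b)) \<and>
     \<comment> \<open>connected\<close>
     (\<forall>u\<in>V. \<forall>v\<in>V. (u, v) \<in> ({(t a, h a) | a. a \<in> E} \<union> {(h a, t a) | a. a \<in> E})\<^sup>*) \<and>
     \<comment> \<open>Euler characteristic 0: the surface is a torus\<close>
     int (card V) - int (card E) + int (card (cyc_orbit pos ` E)) + int (card (cyc_orbit neg ` E)) = 0"

definition dimer_ideal :: "'v set \<Rightarrow> 'a set \<Rightarrow> ('a \<Rightarrow> 'v) \<Rightarrow> ('a \<Rightarrow> 'v) \<Rightarrow> ('a \<Rightarrow> 'a) \<Rightarrow> ('a \<Rightarrow> 'a) \<Rightarrow> (('v,'a) qpath \<Rightarrow> 'k::field) set" where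
  "dimer_ideal V E t h pos neg = gen_ideal V E t h
     {(\<lambda>r. kQ_delta p r - kQ_delta q r) | a p q. a \<in> E \<and>
        p \<in> {cyc_rest pos h a, cyc_rest neg h a} \<and> q \<in> {cyc_rest pos h a, cyc_rest neg h a}}"

definition perfect_matching :: "'a set \<Rightarrow> ('a \<Rightarrow> 'a) \<Rightarrow> ('a \<Rightarrow> 'a) \<Rightarrow> 'a set \<Rightarrow> bool" where
  "perfect_matching E pos neg P \<longleftrightarrow> P \<subseteq> E \<and>
     (\<forall>a\<in>E. card (cyc_orbit pos a \<inter> P) = 1 \<and> card (cyc_orbit neg a \<inter> P) = 1)"

text \<open>Contracting D: vertices of Q' are the classes of the equivalence generated by
  identifying t d and h d for d in D; arrows of Q' are E - D.\<close>
definition ctr_cls :: "'a set \<Rightarrow> ('a \<Rightarrow> 'v) \<Rightarrow> ('a \<Rightarrow> 'v) \<Rightarrow> 'v \<Rightarrow> 'v set" where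
  "ctr_cls D t h v = {w. (v, w) \<in> ({(t d, h d) | d. d \<in> D} \<union> {(h d, t d) | d. d \<in> D})\<^sup>*}"

definition ctr_path :: "'a set \<Rightarrow> ('a \<Rightarrow> 'v) \<Rightarrow> ('a \<Rightarrow> 'v) \<Rightarrow> ('v,'a) qpath \<Rightarrow> ('v set,'a) qpath" where
  "ctr_path D t h p = (ctr_cls D t h (fst p), filter (\<lambda>a. a \<notin> D) (snd p))"

definition ctr_psi :: "'a set \<Rightarrow> ('a \<Rightarrow> 'v) \<Rightarrow> ('a \<Rightarrow> 'v) \<Rightarrow> (('v,'a) qpath \<Rightarrow> 'k::field) \<Rightarrow> (('v set,'a) qpath \<Rightarrow> 'k)" where
  "ctr_psi D t h f = (\<lambda>r'. \<Sum>r\<in>{r. f r \<noteq> 0 \<and> ctr_path D t h r = r'}. f r)"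

end

theory Submission
  imports Defs
begin

lemma cyc_len_props:
  assumes "f permutes E" "finite E"
  shows "0 < cyc_len f a" "(f ^^ cyc_len f a) a = a"
proof -
  have "permutation f" using assms permutation_permutes by blast
  then obtain n where "n>0" "(f^^n) a = a" by (rule permutation_self)
  then have "0 < cyc_len f a \<and> (f ^^ cyc_len f a) a = a"
    unfolding cyc_len_def using LeastI[of "\<lambda>n. 0 < n \<and> (f^^n) a = a" n] by blast
  then show "0 < cyc_len f a" "(f ^^ cyc_len f a) a = a" by auto
qed

lemma cyc_len_min: "0 < m \<Longrightarrow> m < cyc_len f a \<Longrightarrow> (f^^m) a \<noteq> a"
  unfolding cyc_len_def using not_less_Least by blast

lemma funpow_mult_fix: "(f^^L) a = a \<Longrightarrow> (f^^(L*k)) a = a"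
proof (induction k)
  case 0 then show ?case by simp
next
  case (Suc k)
  have "(f^^(L*Suc k)) a = (f^^(L*k)) ((f^^L) a)" by (metis add.commute comp_apply funpow_add mult_Suc_right)
  then show ?case using Suc by simp
qed

lemma funpow_mod_eq: assumes "(f^^L) a = a" shows "(f^^n) a = (f^^(n mod L)) a"
proof -
  have "n = n mod L + L * (n div L)" by simp
  then have "(f^^n) a = (f^^(n mod L)) ((f^^(L * (n div L))) a)"
    by (metis comp_apply funpow_add)
  then show ?thesis using funpow_mult_fix[OF assms] by simp
qed

lemma cyc_distinct:
  assumes "f permutes E" "finite E"
  shows "distinct (map (\<lambda>i. (f^^i) a) [0..<cyc_len f a])"
proof -
  have inj: "inj (f^^i)" for i using permutes_inj[OF assms(1)] by (rule inj_fn)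
  have key: False if ij: "i < j" "j < cyc_len f a" and eq: "(f^^i) a = (f^^j) a" for i j
  proof -
    have "j = i + (j - i)" using ij by simp
    then have "(f^^j) a = (f^^i) ((f^^(j-i)) a)" by (metis comp_apply funpow_add)
    then have "(f^^i) ((f^^(j-i)) a) = (f^^i) a" using eq by simp
    then have "(f^^(j-i)) a = a" using inj[of i] by (simp add: inj_eq)
    moreover have "0 < j - i" using ij(1) by linarith
    moreover have "j - i < cyc_len f a" using ij(2) by linarith
    ultimately show False using cyc_len_min[of "j - i" f a] by simp
  qed
  show ?thesis
  proof (subst distinct_conv_nth, intro allI impI)
    fix i j assume ij: "i < length (map (\<lambda>i. (f^^i) a) [0..<cyc_len f a])"
      "j < length (map (\<lambda>i. (f^^i) a) [0..<cyc_len f a])" "i \<noteq> j"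
    then have ij': "i < cyc_len f a" "j < cyc_len f a" by auto
    show "map (\<lambda>i. (f^^i) a) [0..<cyc_len f a] ! i \<noteq> map (\<lambda>i. (f^^i) a) [0..<cyc_len f a] ! j"
    proof
      assume "map (\<lambda>i. (f^^i) a) [0..<cyc_len f a] ! i = map (\<lambda>i. (f^^i) a) [0..<cyc_len f a] ! j"
      then have eq: "(f^^i) a = (f^^j) a" using ij' by simp
      show False
      proof (cases "i < j")
        case True show False by (rule key[OF True ij'(2) eq])
      next
        case False then have "j < i" using ij(3) by simp
        then show False using key[OF _ ij'(1)] eq by metis
      qed
    qed
  qed
qed

lemma cyc_orbit_set:
  assumes "f permutes E" "finite E"
  shows "cyc_orbit f a = set (map (\<lambda>i. (f^^i) a) [0..<cyc_len f a])"
proof -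
  have L: "0 < cyc_len f a" "(f ^^ cyc_len f a) a = a" using cyc_len_props[OF assms] by auto
  show ?thesis unfolding cyc_orbit_def
  proof (intro equalityI subsetI)
    fix x assume "x \<in> {(f ^^ n) a |n. True}"
    then obtain n where x: "x = (f^^n) a" by blast
    have m: "n mod cyc_len f a \<in> {0..<cyc_len f a}" using L(1) by simp
    have "x = (f^^(n mod cyc_len f a)) a" using x funpow_mod_eq[OF L(2)] by simp
    then show "x \<in> set (map (\<lambda>i. (f^^i) a) [0..<cyc_len f a])" using m by simp
  next
    fix x assume "x \<in> set (map (\<lambda>i. (f^^i) a) [0..<cyc_len f a])"
    then show "x \<in> {(f ^^ n) a |n. True}" by auto
  qed
qed

lemma cyc_orbit_f:
  assumes "f permutes E" "finite E"
  shows "cyc_orbit f (f a) = cyc_orbit f a"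
proof -
  let ?L = "cyc_len f a"
  have L: "0 < ?L" "(f^^?L) a = a" using cyc_len_props[OF assms] by auto
  have "(f^^m) a = (f^^(m + ?L - 1)) (f a)" for m
  proof -
    have "(f^^(m + ?L - 1)) (f a) = (f^^(Suc (m + ?L - 1))) a" by (simp add: funpow_swap1)
    also have "Suc (m + ?L - 1) = m + ?L" using L(1) by simp
    also have "(f^^(m+?L)) a = (f^^m) a" using L(2) by (simp add: funpow_add)
    finally show ?thesis by simp
  qed
  moreover have "(f^^n) (f a) = (f^^(Suc n)) a" for n by (simp add: funpow_swap1)
  ultimately show ?thesis unfolding cyc_orbit_def by blast
qed

definition deg :: "'a set \<Rightarrow> ('v,'a) qpath \<Rightarrow> nat" where
  "deg P r = length (filter (\<lambda>x. x \<in> P) (snd r))"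

lemma card_orbit_rest:
  assumes "f permutes E" "finite E"
  shows "card (cyc_orbit f a \<inter> P) = (if a \<in> P then 1 else 0) + deg P (cyc_rest f h a)"
proof -
  let ?L = "cyc_len f a"
  let ?xs = "map (\<lambda>i. (f^^i) a) [0..<?L]"
  have d: "distinct (filter (\<lambda>x. x \<in> P) ?xs)" using cyc_distinct[OF assms] by simp
  have "cyc_orbit f a \<inter> P = set (filter (\<lambda>x. x \<in> P) ?xs)"
    unfolding cyc_orbit_set[OF assms] set_filter by blast
  then have "card (cyc_orbit f a \<inter> P) = card (set (filter (\<lambda>x. x \<in> P) ?xs))" by simp
  also have "\<dots> = length (filter (\<lambda>x. x \<in> P) ?xs)" using distinct_card[OF d] .
  finally have c1: "card (cyc_orbit f a \<inter> P) = length (filter (\<lambda>x. x \<in> P) ?xs)" .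
  have xs: "?xs = a # map (\<lambda>i. (f^^i) a) [1..<?L]"
    using cyc_len_props(1)[OF assms] by (simp add: upt_conv_Cons)
  have A: "length (filter (\<lambda>x. x \<in> P) ?xs) = (if a \<in> P then 1 else 0) + length (filter (\<lambda>x. x \<in> P) (map (\<lambda>i. (f^^i) a) [1..<?L]))"
    unfolding xs by simp
  have B: "deg P (cyc_rest f h a) = length (filter (\<lambda>x. x \<in> P) (map (\<lambda>i. (f^^i) a) [1..<?L]))"
    unfolding deg_def cyc_rest_def by (simp only: snd_conv)
  show ?thesis unfolding c1 B by (rule A)
qed


lemma is_path_concat:
  assumes px: "is_path V E t h x" and py: "is_path V E t h y" and j: "p_end h y = fst x"
  shows "is_path V E t h (fst y, snd y @ snd x)"
proof -
  obtain v ys where y: "y = (v, ys)" by (cases y)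
  obtain w xs where x: "x = (w, xs)" by (cases x)
  have Y1: "v \<in> V" and Y2: "set ys \<subseteq> E" and Y3: "ys \<noteq> [] \<longrightarrow> t (hd ys) = v"
    and Y4: "\<forall>i. Suc i < length ys \<longrightarrow> h (ys!i) = t (ys ! Suc i)"
    using py unfolding is_path_def y by auto
  have X2: "set xs \<subseteq> E" and X3: "xs \<noteq> [] \<longrightarrow> t (hd xs) = w"
    and X4: "\<forall>i. Suc i < length xs \<longrightarrow> h (xs!i) = t (xs ! Suc i)"
    using px unfolding is_path_def x by auto
  have J: "(if ys = [] then v else h (last ys)) = w"
    using j unfolding p_end_def x y by (cases "ys = []") auto
  have C: "h ((ys@xs)!i) = t ((ys@xs)! Suc i)" if i: "Suc i < length (ys@xs)" for i
  proof (cases "Suc i < length ys")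
    case True then show ?thesis using Y4 by (simp add: nth_append)
  next
    case False
    show ?thesis
    proof (cases "Suc i = length ys")
      case True
      then have ne: "ys \<noteq> []" "xs \<noteq> []" using i by auto
      have ii: "length ys - Suc 0 = i" using True by simp
      have "(ys@xs)!i = last ys" using True ne by (simp add: nth_append last_conv_nth ii)
      moreover have "(ys@xs)!Suc i = hd xs" using True ne by (simp add: nth_append hd_conv_nth)
      ultimately show ?thesis using J X3 ne by simp
    next
      case False2: False
      then have le: "length ys \<le> i" using False by simp
      then have "(ys@xs)!i = xs!(i - length ys)" "(ys@xs)!Suc i = xs!Suc (i - length ys)"
        by (simp_all add: nth_append Suc_diff_le)
      moreover have "Suc (i - length ys) < length xs" using i le by simp
      ultimately show ?thesis using X4 by simp
    qed
  qed
  have H: "ys @ xs \<noteq> [] \<longrightarrow> t (hd (ys @ xs)) = v"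
    using Y3 X3 J by (cases ys) auto
  show ?thesis unfolding is_path_def x y using Y1 Y2 X2 C H by auto
qed

lemma p_end_concat: "p_end h y = fst x \<Longrightarrow> p_end h (fst y, snd y @ snd x) = p_end h x"
  by (auto simp: p_end_def)

lemma deg_concat: "deg P (fst y, snd y @ snd x) = deg P y + deg P x"
  by (simp add: deg_def)

definition blk :: "('a \<Rightarrow> 'v) \<Rightarrow> 'a set \<Rightarrow> 'v \<Rightarrow> 'v \<Rightarrow> nat \<Rightarrow> ('v,'a) qpath \<Rightarrow> bool" where
  "blk h P s e n r \<longleftrightarrow> fst r = s \<and> p_end h r = e \<and> deg P r = n"

definition bsum :: "('a \<Rightarrow> 'v) \<Rightarrow> 'a set \<Rightarrow> (('v,'a) qpath \<Rightarrow> 'k::field) \<Rightarrow> 'v \<Rightarrow> 'v \<Rightarrow> nat \<Rightarrow> 'k" where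
  "bsum h P g s e n = (\<Sum>r\<in>{r. g r \<noteq> 0}. if blk h P s e n r then g r else 0)"

definition Jset :: "'v set \<Rightarrow> 'a set \<Rightarrow> ('a \<Rightarrow> 'v) \<Rightarrow> ('a \<Rightarrow> 'v) \<Rightarrow> 'a set \<Rightarrow> (('v,'a) qpath \<Rightarrow> 'k::field) set" where
  "Jset V E t h P = {g. in_kQ V E t h g \<and> (\<forall>s e n. bsum h P g s e n = 0)}"

lemma bsum_superset:
  assumes "finite S" "{r. g r \<noteq> 0} \<subseteq> S"
  shows "bsum h P g s e n = (\<Sum>r\<in>S. if blk h P s e n r then g r else 0)"
  unfolding bsum_def by (rule sum.mono_neutral_left[OF assms]) auto

lemma kQ_mult_sum:
  fixes u f :: "('v,'a) qpath \<Rightarrow> 'k::field"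
  assumes fu: "finite {x. u x \<noteq> 0}" and ff: "finite {y. f y \<noteq> 0}"
  shows "finite {r. kQ_mult h u f r \<noteq> 0}"
    and "\<And>r. kQ_mult h u f r \<noteq> 0 \<Longrightarrow> \<exists>x y. u x \<noteq> 0 \<and> f y \<noteq> 0 \<and> p_end h y = fst x \<and> r = (fst y, snd y @ snd x)"
    and "(\<Sum>r\<in>{r. kQ_mult h u f r \<noteq> 0}. if B r then kQ_mult h u f r else 0)
       = (\<Sum>x\<in>{x. u x \<noteq> 0}. \<Sum>y\<in>{y. f y \<noteq> 0}. if p_end h y = fst x \<and> B (fst y, snd y @ snd x) then u x * f y else 0)"
proof -
  define Pr where "Pr = {x. u x \<noteq> 0} \<times> {y. f y \<noteq> 0}"
  define cmp :: "('v,'a) qpath \<times> ('v,'a) qpath \<Rightarrow> ('v,'a) qpath" where "cmp = (\<lambda>(x,y). (fst y, snd y @ snd x))"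
  define OK where "OK = {p \<in> Pr. p_end h (snd p) = fst (fst p)}"
  define T where "T = cmp ` OK"
  define g where "g = (\<lambda>(x,y). u x * f y)"
  have fPr: "finite Pr" unfolding Pr_def using fu ff by simp
  have fOK: "finite OK" unfolding OK_def using fPr by simp
  have fT: "finite T" unfolding T_def using fOK by simp
  have setq: "{(x,y). u x \<noteq> 0 \<and> f y \<noteq> 0 \<and> pcomp h x y = Some r} = {p \<in> OK. cmp p = r}" for r
    unfolding OK_def Pr_def cmp_def pcomp_def by (auto split: if_splits)
  have km: "kQ_mult h u f r = (\<Sum>p\<in>{p \<in> OK. cmp p = r}. g p)" for r
    unfolding kQ_mult_def setq[symmetric] g_def ..
  have supp: "{r. kQ_mult h u f r \<noteq> 0} \<subseteq> T"
  proof
    fix r assume r: "r \<in> {r. kQ_mult h u f r \<noteq> 0}"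
    have "{p \<in> OK. cmp p = r} \<noteq> {}"
    proof
      assume e: "{p \<in> OK. cmp p = r} = {}"
      have "kQ_mult h u f r = 0" unfolding km e by simp
      then show False using r by simp
    qed
    then show "r \<in> T" unfolding T_def by blast
  qed
  show "finite {r. kQ_mult h u f r \<noteq> 0}" using supp fT by (rule finite_subset)
  show "\<exists>x y. u x \<noteq> 0 \<and> f y \<noteq> 0 \<and> p_end h y = fst x \<and> r = (fst y, snd y @ snd x)"
    if "kQ_mult h u f r \<noteq> 0" for r
  proof -
    have "{p \<in> OK. cmp p = r} \<noteq> {}"
    proof
      assume e: "{p \<in> OK. cmp p = r} = {}"
      have "kQ_mult h u f r = 0" unfolding km e by simp
      then show False using that by simp
    qed
    then obtain x y where xy: "(x,y) \<in> OK" "cmp (x,y) = r" by auto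
    then have "u x \<noteq> 0 \<and> f y \<noteq> 0 \<and> p_end h y = fst x \<and> r = (fst y, snd y @ snd x)"
      unfolding OK_def Pr_def cmp_def by auto
    then show ?thesis by blast
  qed
  have "(\<Sum>r\<in>{r. kQ_mult h u f r \<noteq> 0}. if B r then kQ_mult h u f r else 0)
      = (\<Sum>r\<in>T. if B r then kQ_mult h u f r else 0)"
    by (rule sum.mono_neutral_left[OF fT supp]) auto
  also have "\<dots> = (\<Sum>r\<in>T. \<Sum>p\<in>{p \<in> OK. cmp p = r}. if B (cmp p) then g p else 0)"
  proof (rule sum.cong[OF refl])
    fix r assume "r \<in> T"
    have "(if B r then kQ_mult h u f r else 0) = (\<Sum>p\<in>{p \<in> OK. cmp p = r}. if B r then g p else 0)"
      unfolding km by simp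
    also have "\<dots> = (\<Sum>p\<in>{p \<in> OK. cmp p = r}. if B (cmp p) then g p else 0)"
      by (rule sum.cong) auto
    finally show "(if B r then kQ_mult h u f r else 0) = (\<Sum>p\<in>{p \<in> OK. cmp p = r}. if B (cmp p) then g p else 0)" .
  qed
  also have "\<dots> = (\<Sum>p\<in>OK. if B (cmp p) then g p else 0)"
    using sum.group[OF fOK fT, of cmp "\<lambda>p. if B (cmp p) then g p else 0"] unfolding T_def by simp
  also have "\<dots> = (\<Sum>p\<in>Pr. if p_end h (snd p) = fst (fst p) then (if B (cmp p) then g p else 0) else 0)"
    unfolding OK_def by (rule sum.inter_filter[OF fPr])
  also have "\<dots> = (\<Sum>p\<in>Pr. case p of (x,y) \<Rightarrow> if p_end h y = fst x \<and> B (fst y, snd y @ snd x) then u x * f y else 0)"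
    by (rule sum.cong[OF refl]) (auto simp: cmp_def g_def)
  also have "\<dots> = (\<Sum>x\<in>{x. u x \<noteq> 0}. \<Sum>y\<in>{y. f y \<noteq> 0}. if p_end h y = fst x \<and> B (fst y, snd y @ snd x) then u x * f y else 0)"
    unfolding Pr_def by (rule sum.cartesian_product[symmetric])
  finally show "(\<Sum>r\<in>{r. kQ_mult h u f r \<noteq> 0}. if B r then kQ_mult h u f r else 0)
       = (\<Sum>x\<in>{x. u x \<noteq> 0}. \<Sum>y\<in>{y. f y \<noteq> 0}. if p_end h y = fst x \<and> B (fst y, snd y @ snd x) then u x * f y else 0)" .
qed

lemma kQ_mult_in_kQ:
  assumes "in_kQ V E t h u" "in_kQ V E t h f"
  shows "in_kQ V E t h (kQ_mult h u f)"
proof -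
  have fu: "finite {x. u x \<noteq> 0}" and ff: "finite {y. f y \<noteq> 0}" using assms unfolding in_kQ_def by auto
  show ?thesis unfolding in_kQ_def
  proof (intro conjI allI impI)
    show "finite {r. kQ_mult h u f r \<noteq> 0}" by (rule kQ_mult_sum(1)[OF fu ff])
    fix r assume "kQ_mult h u f r \<noteq> 0"
    then obtain x y where xy: "u x \<noteq> 0" "f y \<noteq> 0" "p_end h y = fst x" "r = (fst y, snd y @ snd x)"
      using kQ_mult_sum(2)[OF fu ff] by blast
    have "is_path V E t h x" using assms(1) xy(1) unfolding in_kQ_def by blast
    moreover have "is_path V E t h y" using assms(2) xy(2) unfolding in_kQ_def by blast
    ultimately show "is_path V E t h r" using xy is_path_concat by metis
  qed
qed


lemma J_zero: "(\<lambda>_. 0) \<in> Jset V E t h P"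
  unfolding Jset_def in_kQ_def bsum_def by simp

lemma J_add:
  assumes "f \<in> Jset V E t h P" "g \<in> Jset V E t h P"
  shows "(\<lambda>r. f r + g r) \<in> Jset V E t h P"
proof -
  have ff: "finite {r. f r \<noteq> 0}" "finite {r. g r \<noteq> 0}"
    and pf: "\<forall>r. f r \<noteq> 0 \<longrightarrow> is_path V E t h r" "\<forall>r. g r \<noteq> 0 \<longrightarrow> is_path V E t h r"
    and sf: "\<forall>s e n. bsum h P f s e n = 0" "\<forall>s e n. bsum h P g s e n = 0"
    using assms unfolding Jset_def in_kQ_def by auto
  define S where "S = {r. f r \<noteq> 0} \<union> {r. g r \<noteq> 0}"
  have fS: "finite S" using ff S_def by simp
  have sub: "{r. f r + g r \<noteq> 0} \<subseteq> S" "{r. f r \<noteq> 0} \<subseteq> S" "{r. g r \<noteq> 0} \<subseteq> S"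
    unfolding S_def by auto
  have ik: "in_kQ V E t h (\<lambda>r. f r + g r)"
    unfolding in_kQ_def
  proof (intro conjI allI impI)
    show "finite {r. f r + g r \<noteq> 0}" using finite_subset[OF sub(1) fS] .
    fix r assume "f r + g r \<noteq> 0"
    then have "f r \<noteq> 0 \<or> g r \<noteq> 0" by auto
    then show "is_path V E t h r" using pf by blast
  qed
  have "bsum h P (\<lambda>r. f r + g r) s e n = 0" for s e n
  proof -
    have "bsum h P (\<lambda>r. f r + g r) s e n = (\<Sum>r\<in>S. if blk h P s e n r then f r + g r else 0)"
      by (rule bsum_superset[OF fS sub(1)])
    also have "\<dots> = (\<Sum>r\<in>S. if blk h P s e n r then f r else 0) + (\<Sum>r\<in>S. if blk h P s e n r then g r else 0)"
      unfolding sum.distrib[symmetric] by (rule sum.cong) auto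
    also have "\<dots> = bsum h P f s e n + bsum h P g s e n"
      using bsum_superset[OF fS sub(2)] bsum_superset[OF fS sub(3)] by simp
    finally show ?thesis using sf by simp
  qed
  then show ?thesis using ik unfolding Jset_def by simp
qed

lemma J_smult:
  assumes "f \<in> Jset V E t h P"
  shows "(\<lambda>r. c * f r) \<in> Jset V E t h P"
proof -
  have ff: "finite {r. f r \<noteq> 0}"
    and pf: "\<forall>r. f r \<noteq> 0 \<longrightarrow> is_path V E t h r"
    and sf: "\<forall>s e n. bsum h P f s e n = 0"
    using assms unfolding Jset_def in_kQ_def by auto
  have sub: "{r. c * f r \<noteq> 0} \<subseteq> {r. f r \<noteq> 0}" by auto
  have ik: "in_kQ V E t h (\<lambda>r. c * f r)"
    unfolding in_kQ_def using finite_subset[OF sub ff] pf by auto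
  have "bsum h P (\<lambda>r. c * f r) s e n = 0" for s e n
  proof -
    have "bsum h P (\<lambda>r. c * f r) s e n = (\<Sum>r\<in>{r. f r \<noteq> 0}. if blk h P s e n r then c * f r else 0)"
      by (rule bsum_superset[OF ff sub])
    also have "\<dots> = c * bsum h P f s e n"
      unfolding bsum_def sum_distrib_left by (rule sum.cong) auto
    finally show ?thesis using sf by simp
  qed
  then show ?thesis using ik unfolding Jset_def by simp
qed

lemma J_multL:
  assumes u: "in_kQ V E t h u" and f: "f \<in> Jset V E t h P"
  shows "kQ_mult h u f \<in> Jset V E t h P"
proof -
  have fu: "finite {x. u x \<noteq> 0}" using u unfolding in_kQ_def by auto
  have ff: "finite {y. f y \<noteq> 0}" and fi: "in_kQ V E t h f"
    and sf: "\<forall>s e n. bsum h P f s e n = 0"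
    using f unfolding Jset_def in_kQ_def by auto
  have "bsum h P (kQ_mult h u f) s e n = 0" for s e n
  proof -
    have inner: "(\<Sum>y\<in>{y. f y \<noteq> 0}. if p_end h y = fst x \<and> blk h P s e n (fst y, snd y @ snd x) then u x * f y else 0) = 0" for x
    proof (cases "p_end h x = e \<and> deg P x \<le> n")
      case True
      have "(\<Sum>y\<in>{y. f y \<noteq> 0}. if p_end h y = fst x \<and> blk h P s e n (fst y, snd y @ snd x) then u x * f y else 0)
          = u x * (\<Sum>y\<in>{y. f y \<noteq> 0}. if blk h P s (fst x) (n - deg P x) y then f y else 0)"
        unfolding sum_distrib_left
      proof (rule sum.cong[OF refl])
        fix y
        have "(p_end h y = fst x \<and> blk h P s e n (fst y, snd y @ snd x)) = blk h P s (fst x) (n - deg P x) y"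
          using True unfolding blk_def by (auto simp: p_end_concat deg_concat)
        then show "(if p_end h y = fst x \<and> blk h P s e n (fst y, snd y @ snd x) then u x * f y else 0)
           = u x * (if blk h P s (fst x) (n - deg P x) y then f y else 0)" by simp
      qed
      also have "\<dots> = 0" using sf unfolding bsum_def by simp
      finally show ?thesis .
    next
      case False
      have "(p_end h y = fst x \<and> blk h P s e n (fst y, snd y @ snd x)) = False" for y
        using False unfolding blk_def by (auto simp: p_end_concat deg_concat)
      then show ?thesis by (simp only: if_False sum.neutral_const)
    qed
    have "bsum h P (kQ_mult h u f) s e n = (\<Sum>x\<in>{x. u x \<noteq> 0}. \<Sum>y\<in>{y. f y \<noteq> 0}. if p_end h y = fst x \<and> blk h P s e n (fst y, snd y @ snd x) then u x * f y else 0)"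
      unfolding bsum_def by (rule kQ_mult_sum(3)[OF fu ff])
    also have "\<dots> = 0" using inner by simp
    finally show ?thesis .
  qed
  then show ?thesis using kQ_mult_in_kQ[OF u fi] unfolding Jset_def by simp
qed

lemma J_multR:
  assumes u: "in_kQ V E t h u" and f: "f \<in> Jset V E t h P"
  shows "kQ_mult h f u \<in> Jset V E t h P"
proof -
  have fu: "finite {x. u x \<noteq> 0}" using u unfolding in_kQ_def by auto
  have ff: "finite {y. f y \<noteq> 0}" and fi: "in_kQ V E t h f"
    and sf: "\<forall>s e n. bsum h P f s e n = 0"
    using f unfolding Jset_def in_kQ_def by auto
  have "bsum h P (kQ_mult h f u) s e n = 0" for s e n
  proof -
    have inner: "(\<Sum>x\<in>{x. f x \<noteq> 0}. if p_end h y = fst x \<and> blk h P s e n (fst y, snd y @ snd x) then f x * u y else 0) = 0" for y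
    proof (cases "fst y = s \<and> deg P y \<le> n")
      case True
      have "(\<Sum>x\<in>{x. f x \<noteq> 0}. if p_end h y = fst x \<and> blk h P s e n (fst y, snd y @ snd x) then f x * u y else 0)
          = u y * (\<Sum>x\<in>{x. f x \<noteq> 0}. if blk h P (p_end h y) e (n - deg P y) x then f x else 0)"
        unfolding sum_distrib_left
      proof (rule sum.cong[OF refl])
        fix x
        have "(p_end h y = fst x \<and> blk h P s e n (fst y, snd y @ snd x)) = blk h P (p_end h y) e (n - deg P y) x"
          using True unfolding blk_def by (auto simp: p_end_concat deg_concat)
        then show "(if p_end h y = fst x \<and> blk h P s e n (fst y, snd y @ snd x) then f x * u y else 0)
           = u y * (if blk h P (p_end h y) e (n - deg P y) x then f x else 0)" by simp
      qed
      also have "\<dots> = 0" using sf unfolding bsum_def by simp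
      finally show ?thesis .
    next
      case False
      have "(p_end h y = fst x \<and> blk h P s e n (fst y, snd y @ snd x)) = False" for x
        using False unfolding blk_def by (auto simp: p_end_concat deg_concat)
      then show ?thesis by (simp only: if_False sum.neutral_const)
    qed
    have "bsum h P (kQ_mult h f u) s e n = (\<Sum>x\<in>{x. f x \<noteq> 0}. \<Sum>y\<in>{y. u y \<noteq> 0}. if p_end h y = fst x \<and> blk h P s e n (fst y, snd y @ snd x) then f x * u y else 0)"
      unfolding bsum_def by (rule kQ_mult_sum(3)[OF ff fu])
    also have "\<dots> = (\<Sum>y\<in>{y. u y \<noteq> 0}. \<Sum>x\<in>{x. f x \<noteq> 0}. if p_end h y = fst x \<and> blk h P s e n (fst y, snd y @ snd x) then f x * u y else 0)"
      by (rule sum.swap)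
    also have "\<dots> = 0" using inner by simp
    finally show ?thesis .
  qed
  then show ?thesis using kQ_mult_in_kQ[OF fi u] unfolding Jset_def by simp
qed

lemma J_ideal: "two_sided_ideal V E t h (Jset V E t h P)"
  unfolding two_sided_ideal_def
proof (intro conjI)
  show "Jset V E t h P \<subseteq> {f. in_kQ V E t h f}" by (auto simp: Jset_def)
  show "(\<lambda>_. 0) \<in> Jset V E t h P" by (rule J_zero)
  show "\<forall>f\<in>Jset V E t h P. \<forall>g\<in>Jset V E t h P. (\<lambda>r. f r + g r) \<in> Jset V E t h P" using J_add by blast
  show "\<forall>f\<in>Jset V E t h P. \<forall>c. (\<lambda>r. c * f r) \<in> Jset V E t h P" using J_smult by blast
  show "\<forall>f\<in>Jset V E t h P. \<forall>u. in_kQ V E t h u \<longrightarrow> kQ_mult h u f \<in> Jset V E t h P \<and> kQ_mult h f u \<in> Jset V E t h P"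
    using J_multL J_multR by blast
qed


lemma rest_props:
  assumes pf: "f permutes E" and fE: "finite E" and a: "a \<in> E"
    and th: "\<forall>x\<in>E. t (f x) = h x" and hV: "h ` E \<subseteq> V"
  shows "fst (cyc_rest f h a) = h a" "p_end h (cyc_rest f h a) = t a" "is_path V E t h (cyc_rest f h a)"
proof -
  let ?L = "cyc_len f a"
  have L: "0 < ?L" "(f^^?L) a = a" using cyc_len_props[OF pf fE] by auto
  have inE: "(f^^i) a \<in> E" for i using permutes_in_funpow_image[OF pf a] .
  have step: "t ((f^^(Suc i)) a) = h ((f^^i) a)" for i using th inE[of i] by simp
  show "fst (cyc_rest f h a) = h a" by (simp add: cyc_rest_def)
  show "p_end h (cyc_rest f h a) = t a"
  proof (cases "?L = 1")
    case True
    then have "f a = a" using L(2) by simp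
    then have "t a = h a" using th a by metis
    then show ?thesis using True by (simp add: p_end_def cyc_rest_def)
  next
    case False
    then have L2: "1 < ?L" using L(1) by simp
    have "last (map (\<lambda>i. (f^^i) a) [1..<?L]) = (f^^(?L - 1)) a" using L2 by (simp add: last_map)
    moreover have "Suc (?L - 1) = ?L" using L2 by simp
    then have "h ((f^^(?L - 1)) a) = t a" using step[of "?L - 1"] L(2) by simp
    ultimately show ?thesis using L2 by (simp add: p_end_def cyc_rest_def)
  qed
  have "is_path V E t h (h a, map (\<lambda>i. (f^^i) a) [1..<?L])"
    unfolding is_path_def fst_conv snd_conv
  proof (intro conjI allI impI)
    show "h a \<in> V" using hV a by auto
    show "set (map (\<lambda>i. (f^^i) a) [1..<?L]) \<subseteq> E" using inE by auto
  next
    assume ne: "map (\<lambda>i. (f^^i) a) [1..<?L] \<noteq> []"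
    then have L2: "1 < ?L" by simp
    then have "hd (map (\<lambda>i. (f^^i) a) [1..<?L]) = (f^^1) a" by (simp add: hd_map)
    then show "t (hd (map (\<lambda>i. (f^^i) a) [1..<?L])) = h a" using step[of 0] by simp
  next
    fix i assume i: "Suc i < length (map (\<lambda>i. (f^^i) a) [1..<?L])"
    then have i2: "1 + Suc i < ?L" by simp
    have n1: "[1..<?L] ! i = Suc i" "[1..<?L] ! Suc i = Suc (Suc i)"
      using nth_upt[of 1 i ?L] nth_upt[of 1 "Suc i" ?L] i2 by simp_all
    have "map (\<lambda>i. (f^^i) a) [1..<?L] ! i = (f^^(Suc i)) a"
      "map (\<lambda>i. (f^^i) a) [1..<?L] ! Suc i = (f^^(Suc (Suc i))) a" using i2 n1 by (simp_all del: funpow.simps)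
    then show "h (map (\<lambda>i. (f^^i) a) [1..<?L] ! i) = t (map (\<lambda>i. (f^^i) a) [1..<?L] ! Suc i)"
      using step[of "Suc i"] by simp
  qed
  then show "is_path V E t h (cyc_rest f h a)" unfolding cyc_rest_def .
qed

lemma gens_in_J:
  assumes dq: "dimer_quiver V E t h pos neg" and pm: "perfect_matching E pos neg P" and a: "a \<in> E"
    and p: "p \<in> {cyc_rest pos h a, cyc_rest neg h a}" and q: "q \<in> {cyc_rest pos h a, cyc_rest neg h a}"
  shows "(\<lambda>r. kQ_delta p r - kQ_delta q r) \<in> (Jset V E t h P :: (('v,'a) qpath \<Rightarrow> 'k::field) set)"
proof -
  from dq have fE: "finite E" and hV: "h ` E \<subseteq> V" and pp: "pos permutes E" and np: "neg permutes E"
    and th: "\<forall>x\<in>E. t (pos x) = h x \<and> t (neg x) = h x" unfolding dimer_quiver_def by auto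
  have cp: "card (cyc_orbit pos a \<inter> P) = 1" "card (cyc_orbit neg a \<inter> P) = 1"
    using pm a unfolding perfect_matching_def by auto
  have thp: "\<forall>x\<in>E. t (pos x) = h x" and thn: "\<forall>x\<in>E. t (neg x) = h x" using th by auto
  have props: "fst r = h a \<and> p_end h r = t a \<and> is_path V E t h r \<and> (if a \<in> P then 1 else 0) + deg P r = 1"
    if "r \<in> {cyc_rest pos h a, cyc_rest neg h a}" for r
  proof -
    from that consider "r = cyc_rest pos h a" | "r = cyc_rest neg h a" by blast
    then show ?thesis
    proof cases
      case 1
      note R = rest_props[OF pp fE a thp hV]
      show ?thesis using R card_orbit_rest[OF pp fE, of a P h] cp(1) 1 by simp
    next
      case 2
      note R = rest_props[OF np fE a thn hV]
      show ?thesis using R card_orbit_rest[OF np fE, of a P h] cp(2) 2 by simp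
    qed
  qed
  note Pp = props[OF p] and Pq = props[OF q]
  have degeq: "deg P p = deg P q" using Pp Pq by simp
  have blkeq: "blk h P s e n p = blk h P s e n q" for s e n
    unfolding blk_def using Pp Pq degeq by simp
  define g :: "('v,'a) qpath \<Rightarrow> 'k" where "g = (\<lambda>r. kQ_delta p r - kQ_delta q r)"
  have sub: "{r. g r \<noteq> 0} \<subseteq> {p,q}" unfolding g_def kQ_delta_def by auto
  have fin: "finite {p,q}" by simp
  have ik: "in_kQ V E t h g"
    unfolding in_kQ_def
  proof (intro conjI allI impI)
    show "finite {r. g r \<noteq> 0}" using finite_subset[OF sub fin] .
    fix r assume "g r \<noteq> 0"
    then have "r = p \<or> r = q" using sub by auto
    then show "is_path V E t h r" using Pp Pq by auto
  qed
  have "bsum h P g s e n = 0" for s e n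
  proof -
    have "bsum h P g s e n = (\<Sum>r\<in>{p,q}. if blk h P s e n r then g r else 0)"
      by (rule bsum_superset[OF fin sub])
    also have "\<dots> = 0"
    proof (cases "p = q")
      case True
      then have "g r = 0" for r unfolding g_def kQ_delta_def by simp
      then show ?thesis by (simp cong: if_cong)
    next
      case False then show ?thesis unfolding g_def kQ_delta_def using blkeq[of s e n] by (simp cong: if_cong)
    qed
    finally show ?thesis .
  qed
  then show ?thesis using ik unfolding Jset_def g_def by simp
qed

lemma dimer_ideal_sub_J:
  assumes dq: "dimer_quiver V E t h pos neg" and pm: "perfect_matching E pos neg P"
  shows "dimer_ideal V E t h pos neg \<subseteq> (Jset V E t h P :: (('v,'a) qpath \<Rightarrow> 'k::field) set)"
proof -
  have G: "({(\<lambda>r. kQ_delta p r - kQ_delta q r) | a p q. a \<in> E \<and>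
        p \<in> {cyc_rest pos h a, cyc_rest neg h a} \<and> q \<in> {cyc_rest pos h a, cyc_rest neg h a}} :: (('v,'a) qpath \<Rightarrow> 'k) set)
     \<subseteq> Jset V E t h P"
    using gens_in_J[OF dq pm] by blast
  have J: "two_sided_ideal V E t h (Jset V E t h P :: (('v,'a) qpath \<Rightarrow> 'k::field) set)" by (rule J_ideal)
  show ?thesis unfolding dimer_ideal_def gen_ideal_def
    by (rule Inter_lower) (use J G in blast)
qed

lemma psi_delta:
  fixes p q :: "('v,'a) qpath"
  assumes "p \<noteq> q"
  shows "ctr_psi D t h ((\<lambda>r. kQ_delta p r - kQ_delta q r) :: ('v,'a) qpath \<Rightarrow> 'k::field)
       = (\<lambda>r'. kQ_delta (ctr_path D t h p) r' - kQ_delta (ctr_path D t h q) r')"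
proof
  fix r'
  define f :: "('v,'a) qpath \<Rightarrow> 'k" where "f = (\<lambda>r. kQ_delta p r - kQ_delta q r)"
  have "{r. f r \<noteq> 0 \<and> ctr_path D t h r = r'} = {r \<in> {p,q}. ctr_path D t h r = r'}"
    using assms unfolding f_def kQ_delta_def by auto
  then have "ctr_psi D t h f r' = (\<Sum>r\<in>{r \<in> {p,q}. ctr_path D t h r = r'}. f r)"
    unfolding ctr_psi_def by simp
  also have "\<dots> = (\<Sum>r\<in>{p,q}. if ctr_path D t h r = r' then f r else 0)"
    by (rule sum.inter_filter) simp
  also have "\<dots> = kQ_delta (ctr_path D t h p) r' - kQ_delta (ctr_path D t h q) r'"
    using assms unfolding f_def kQ_delta_def by auto
  finally show "ctr_psi D t h ((\<lambda>r. kQ_delta p r - kQ_delta q r) :: ('v,'a) qpath \<Rightarrow> 'k) r'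
       = kQ_delta (ctr_path D t h p) r' - kQ_delta (ctr_path D t h q) r'" unfolding f_def .
qed

lemma deg_ctr_path:
  assumes "P \<inter> D = {}"
  shows "deg P (ctr_path D t h r) = deg P r"
proof -
  have "filter (\<lambda>x. x \<in> P) (filter (\<lambda>a. a \<notin> D) xs) = filter (\<lambda>x. x \<in> P) xs" for xs
    using assms by (induct xs) auto
  then show ?thesis unfolding deg_def ctr_path_def by simp
qed


theorem lemma3p5:
  fixes V :: "'v set" and E :: "'a set" and t h :: "'a \<Rightarrow> 'v"
    and pos neg pos' neg' :: "'a \<Rightarrow> 'a" and D P :: "'a set"
  assumes "alg_closed TYPE('k::field)"
    and "dimer_quiver V E t h pos neg"
    and "D \<subseteq> E"
    and "dimer_quiver (ctr_cls D t h ` V) (E - D) (ctr_cls D t h \<circ> t) (ctr_cls D t h \<circ> h) pos' neg'"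
    and "\<forall>f \<in> (dimer_ideal V E t h pos neg :: (('v,'a) qpath \<Rightarrow> 'k) set).
           ctr_psi D t h f \<in> dimer_ideal (ctr_cls D t h ` V) (E - D) (ctr_cls D t h \<circ> t) (ctr_cls D t h \<circ> h) pos' neg'"
    and "perfect_matching (E - D) pos' neg' P"
  shows "\<forall>a\<in>E. \<not> cyc_orbit pos a \<subseteq> D \<and> \<not> cyc_orbit neg a \<subseteq> D"
proof (rule ccontr)
  assume "\<not> (\<forall>a\<in>E. \<not> cyc_orbit pos a \<subseteq> D \<and> \<not> cyc_orbit neg a \<subseteq> D)"
  then obtain a0 where a0: "a0 \<in> E" and a0D: "cyc_orbit pos a0 \<subseteq> D \<or> cyc_orbit neg a0 \<subseteq> D" by blast
  have dq: "dimer_quiver V E t h pos neg" by fact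
  from dq have fE: "finite E" and hV: "h ` E \<subseteq> V" and pp: "pos permutes E" and np: "neg permutes E"
    and th: "\<forall>x\<in>E. t (pos x) = h x \<and> t (neg x) = h x"
    and vtx: "\<forall>a\<in>E. \<forall>b\<in>E. h a = h b \<longrightarrow> (\<exists>n. ((\<lambda>x. inv neg (pos x)) ^^ n) a = b)"
    and conn: "\<forall>u\<in>V. \<forall>v\<in>V. (u, v) \<in> ({(t a, h a) | a. a \<in> E} \<union> {(h a, t a) | a. a \<in> E})\<^sup>*"
    unfolding dimer_quiver_def by auto
  have PE: "P \<subseteq> E - D" using assms(6) unfolding perfect_matching_def by auto
  have PD: "P \<inter> D = {}" using PE by auto
  define wp where "wp a = card (cyc_orbit pos a \<inter> P)" for a
  define wn where "wn a = card (cyc_orbit neg a \<inter> P)" for a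
  have K1: "wp a = wn a" if a: "a \<in> E" for a
  proof (rule ccontr)
    assume ne: "wp a \<noteq> wn a"
    let ?p = "cyc_rest pos h a"
    let ?q = "cyc_rest neg h a"
    let ?pp = "ctr_path D t h ?p"
    let ?qq = "ctr_path D t h ?q"
    have dp: "wp a = (if a \<in> P then 1 else 0) + deg P ?p" unfolding wp_def by (rule card_orbit_rest[OF pp fE])
    have dn: "wn a = (if a \<in> P then 1 else 0) + deg P ?q" unfolding wn_def by (rule card_orbit_rest[OF np fE])
    have dne: "deg P ?p \<noteq> deg P ?q" using ne dp dn by simp
    have e1: "deg P ?pp = deg P ?p" by (rule deg_ctr_path[OF PD])
    have e2: "deg P ?qq = deg P ?q" by (rule deg_ctr_path[OF PD])
    have dne2: "deg P ?pp \<noteq> deg P ?qq" using dne unfolding e1 e2 .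
    have pq: "?p \<noteq> ?q" using dne by auto
    have ppqq: "?pp \<noteq> ?qq" using dne2 by auto
    define f :: "('v,'a) qpath \<Rightarrow> 'k" where "f = (\<lambda>r. kQ_delta ?p r - kQ_delta ?q r)"
    have fS: "f \<in> ({(\<lambda>r. kQ_delta p r - kQ_delta q r) | a p q. a \<in> E \<and>
        p \<in> {cyc_rest pos h a, cyc_rest neg h a} \<and> q \<in> {cyc_rest pos h a, cyc_rest neg h a}} :: (('v,'a) qpath \<Rightarrow> 'k) set)"
      unfolding f_def using a by blast
    have fI: "f \<in> (dimer_ideal V E t h pos neg :: (('v,'a) qpath \<Rightarrow> 'k) set)"
      unfolding dimer_ideal_def gen_ideal_def using fS by blast
    then have "ctr_psi D t h f \<in> dimer_ideal (ctr_cls D t h ` V) (E - D) (ctr_cls D t h \<circ> t) (ctr_cls D t h \<circ> h) pos' neg'"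
      using assms(5) by blast
    then have "ctr_psi D t h f \<in> (Jset (ctr_cls D t h ` V) (E - D) (ctr_cls D t h \<circ> t) (ctr_cls D t h \<circ> h) P :: (('v set,'a) qpath \<Rightarrow> 'k) set)"
      using dimer_ideal_sub_J[OF assms(4) assms(6)] by blast
    then have bs: "bsum (ctr_cls D t h \<circ> h) P (ctr_psi D t h f) s e n = 0" for s e n
      unfolding Jset_def by simp
    have cf: "ctr_psi D t h f = (\<lambda>r'. kQ_delta ?pp r' - kQ_delta ?qq r')"
      unfolding f_def by (rule psi_delta[OF pq])
    let ?h' = "ctr_cls D t h \<circ> h"
    have sub: "{r. ctr_psi D t h f r \<noteq> 0} \<subseteq> {?pp, ?qq}" unfolding cf kQ_delta_def by auto
    have "bsum ?h' P (ctr_psi D t h f) (fst ?pp) (p_end ?h' ?pp) (deg P ?pp)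
        = (\<Sum>r\<in>{?pp, ?qq}. if blk ?h' P (fst ?pp) (p_end ?h' ?pp) (deg P ?pp) r then ctr_psi D t h f r else 0)"
      by (rule bsum_superset[OF _ sub]) simp
    also have "\<dots> = 1"
      using ppqq dne2 unfolding cf kQ_delta_def blk_def by (simp cong: if_cong)
    finally show False using bs by simp
  qed
  have wp_pos: "wp (pos a) = wp a" for a unfolding wp_def using cyc_orbit_f[OF pp fE] by simp
  have wn_neg: "wn (neg a) = wn a" for a unfolding wn_def using cyc_orbit_f[OF np fE] by simp
  have negE: "neg a \<in> E" if "a \<in> E" for a using that np by (simp add: permutes_in_image)
  have wp_neg: "wp (neg a) = wp a" if a: "a \<in> E" for a
    using K1[OF a] K1[OF negE[OF a]] wn_neg[of a] by simp
  have ipE: "inv pos a \<in> E" if "a \<in> E" for a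
    using that permutes_inv[OF pp] by (simp add: permutes_in_image)
  have inE: "inv neg a \<in> E" if "a \<in> E" for a
    using that permutes_inv[OF np] by (simp add: permutes_in_image)
  have wp_ipos: "wp (inv pos a) = wp a" if a: "a \<in> E" for a
    using wp_pos[of "inv pos a"] permutes_inverses(1)[OF pp, of a] by simp
  have wp_ineg: "wp (inv neg a) = wp a" if a: "a \<in> E" for a
    using wp_neg[OF inE[OF a]] permutes_inverses(1)[OF np, of a] by simp
  have rho: "((\<lambda>x. inv neg (pos x)) ^^ n) a \<in> E \<and> wp (((\<lambda>x. inv neg (pos x)) ^^ n) a) = wp a"
    if a: "a \<in> E" for a n
  proof (induction n)
    case 0 then show ?case using a by simp
  next
    case (Suc n)
    let ?b = "((\<lambda>x. inv neg (pos x)) ^^ n) a"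
    have b: "?b \<in> E" using Suc by simp
    have pb: "pos ?b \<in> E" using b pp by (simp add: permutes_in_image)
    have "((\<lambda>x. inv neg (pos x)) ^^ Suc n) a = inv neg (pos ?b)" by simp
    moreover have "inv neg (pos ?b) \<in> E" using inE[OF pb] .
    moreover have "wp (inv neg (pos ?b)) = wp ?b" using wp_ineg[OF pb] wp_pos[of ?b] by simp
    ultimately show ?case using Suc by simp
  qed
  have vert: "wp a = wp b" if ab: "a \<in> E" "b \<in> E" "h a = h b" for a b
  proof -
    obtain n where "((\<lambda>x. inv neg (pos x)) ^^ n) a = b" using vtx ab by blast
    then show ?thesis using rho[OF ab(1), of n] by simp
  qed
  have star: "\<exists>c\<in>E. h c = v \<and> wp c = wp a" if "a \<in> E" "h a = v \<or> t a = v" for a v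
  proof (cases "h a = v")
    case True then show ?thesis using that by blast
  next
    case False
    then have ta: "t a = v" using that by simp
    have "h (inv pos a) = t (pos (inv pos a))" using th ipE[OF that(1)] by simp
    also have "\<dots> = v" using ta permutes_inverses(1)[OF pp, of a] by simp
    finally show ?thesis using ipE[OF that(1)] wp_ipos[OF that(1)] by blast
  qed
  have inc: "wp a = wp b" if ab: "a \<in> E" "b \<in> E" "h a = v \<or> t a = v" "h b = v \<or> t b = v" for a b v
  proof -
    obtain a' where a': "a' \<in> E" "h a' = v" "wp a' = wp a" using star[OF ab(1) ab(3)] by blast
    obtain b' where b': "b' \<in> E" "h b' = v" "wp b' = wp b" using star[OF ab(2) ab(4)] by blast
    show ?thesis using vert[OF a'(1) b'(1)] a' b' by simp
  qed
  have ha0: "h a0 \<in> V" using hV a0 by auto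
  have reach: "\<exists>c\<in>E. (h c = v \<or> t c = v) \<and> wp c = wp a0" if v: "v \<in> V" for v
  proof -
    have "(h a0, v) \<in> ({(t a, h a) | a. a \<in> E} \<union> {(h a, t a) | a. a \<in> E})\<^sup>*" using conn ha0 v by blast
    then show ?thesis
    proof (induction rule: rtrancl_induct)
      case base then show ?case using a0 by blast
    next
      case (step x y)
      obtain c where c: "c \<in> E" "h c = x \<or> t c = x" "wp c = wp a0" using step.IH by blast
      from step.hyps(2) obtain d where d: "d \<in> E" "(x = t d \<and> y = h d) \<or> (x = h d \<and> y = t d)" by blast
      have dx: "h d = x \<or> t d = x" using d(2) by auto
      have wd: "wp d = wp c" using inc[OF d(1) c(1) dx c(2)] .
      have dy: "h d = y \<or> t d = y" using d(2) by auto
      have "(h d = y \<or> t d = y) \<and> wp d = wp a0" using dy wd c(3) by simp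
      then show ?case using d(1) by (rule_tac bexI)
    qed
  qed
  have allw: "wp b = wp a0" if b: "b \<in> E" for b
  proof -
    obtain c where c: "c \<in> E" "h c = h b \<or> t c = h b" "wp c = wp a0" using reach[of "h b"] hV b by blast
    show ?thesis using inc[OF b c(1), of "h b"] c by simp
  qed
  have w0: "wp a0 = 0"
  proof (cases "cyc_orbit pos a0 \<subseteq> D")
    case True
    then have "cyc_orbit pos a0 \<inter> P = {}" using PD by blast
    then show ?thesis unfolding wp_def by simp
  next
    case False
    then have "cyc_orbit neg a0 \<subseteq> D" using a0D by simp
    then have "cyc_orbit neg a0 \<inter> P = {}" using PD by blast
    then show ?thesis using K1[OF a0] unfolding wn_def by simp
  qed
  have "ctr_cls D t h ` V \<noteq> {}" and hd': "\<forall>v\<in>ctr_cls D t h ` V. \<exists>a\<in>E - D. (ctr_cls D t h \<circ> h) a = v"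
    using assms(4) unfolding dimer_quiver_def by auto
  then obtain b where b: "b \<in> E - D" by blast
  then have "card (cyc_orbit pos' b \<inter> P) = 1" using assms(6) unfolding perfect_matching_def by auto
  then obtain x where xP: "x \<in> P" by (metis card.empty disjoint_iff_not_equal zero_neq_one)
  then have xE: "x \<in> E" using PE by auto
  have "x \<in> cyc_orbit pos x" unfolding cyc_orbit_def by (metis (mono_tags, lifting) funpow_0 mem_Collect_eq)
  then have "x \<in> cyc_orbit pos x \<inter> P" using xP by simp
  moreover have "finite (cyc_orbit pos x \<inter> P)" using fE PE by (meson finite_Diff finite_Int finite_subset)
  ultimately have "wp x \<noteq> 0" unfolding wp_def by auto
  then show False using allw[OF xE] w0 by simp
qed

end
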